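(* Let $m\in\mathbb{N}$, $m\geq 2$, let $\Sigma\subset\{0,1,\dots,m-1\}^{\mathbb{N}}$ be a (one-sided) subshift of finite type, and let $$A=\Big\{\sum_{i=1}^\infty \frac{x_i}{m^i}:(x_i)\in\Sigma\Big\}.$$ If $A$ is nowhere dense in $[0,1]$, then for every $t\in(0,1)$ that has a universal $m$-adic expansion, $$A-t\subset\mathbb{Q}^c,\qquad A+t\subset\mathbb{Q}^c,\qquad \frac{A}{t}\subset\mathbb{Q}^c.$$ Moreover, if $t\in(1,\infty)$ and $1/t$ has a universal $m$-adic expansion, then $tA\subset\mathbb{Q}^c$.
   Context: An $m$-adic expansion of $t\in(0,1)$ is a sequence $(t_k)\in\{0,1,\dots,m-1\}^{\mathbb{N}}$ with $t=\sum_{k\geq1}t_k m^{-k}$. Such an expansion is universal if for every $k\geq1$ and every word $x_1\cdots x_k\in\{0,\dots,m-1\}^k$ there is $k_0\in\mathbb{N}$ with $t_{k_0+1}\cdots t_{k_0+k}=x_1\cdots x_k$; $t$ has a universal $m$-adic expansion if some $m$-adic expansion of it is universal. A subshift of finite type over $\{0,\dots,m-1\}$ is the set of sequences in $\{0,\dots,m-1\}^{\mathbb{N}}$ avoiding a given finite list of forbidden words. Notation: $A\pm t=\{x\pm t:x\in A\}$, $tA=\{tx:x\in A\setminus\{0\}\}$, $\frac{A}{t}=\{t^{-1}x:x\in A\setminus\{0\}\}$. $\mathbb{Q}^c$ denotes the set of irrational real numbers. *)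

theory Defs
  imports "HOL-Analysis.Analysis"
begin

text \<open>Sequences in {0,...,m-1}^N are represented as nat => nat, indexed from 0
  (so x 0 is the paper's x_1). Words are lists.\<close>

definition digit_seq :: "nat \<Rightarrow> (nat \<Rightarrow> nat) \<Rightarrow> bool" where
  "digit_seq m x \<longleftrightarrow> (\<forall>k. x k < m)"

definition occurs_at :: "nat list \<Rightarrow> (nat \<Rightarrow> nat) \<Rightarrow> nat \<Rightarrow> bool" where
  "occurs_at w x k0 \<longleftrightarrow> (\<forall>i<length w. x (k0 + i) = w ! i)"

definition sft :: "nat \<Rightarrow> nat list set \<Rightarrow> (nat \<Rightarrow> nat) set" where
  "sft m F = {x. digit_seq m x \<and> (\<forall>w\<in>F. \<forall>k0. \<not> occurs_at w x k0)}"

definition madic_value :: "nat \<Rightarrow> (nat \<Rightarrow> nat) \<Rightarrow> real" where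
  "madic_value m x = (\<Sum>i. real (x i) / real m ^ (i + 1))"

definition is_madic_expansion :: "nat \<Rightarrow> real \<Rightarrow> (nat \<Rightarrow> nat) \<Rightarrow> bool" where
  "is_madic_expansion m t x \<longleftrightarrow> digit_seq m x \<and> t = madic_value m x"

definition universal_seq :: "nat \<Rightarrow> (nat \<Rightarrow> nat) \<Rightarrow> bool" where
  "universal_seq m x \<longleftrightarrow>
     (\<forall>w. length w \<ge> 1 \<longrightarrow> (\<forall>a\<in>set w. a < m) \<longrightarrow> (\<exists>k0. occurs_at w x k0))"

definition has_universal_expansion :: "nat \<Rightarrow> real \<Rightarrow> bool" where
  "has_universal_expansion m t \<longleftrightarrow> (\<exists>x. is_madic_expansion m t x \<and> universal_seq m x)"

definition scale_set :: "real \<Rightarrow> real set \<Rightarrow> real set" where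
  "scale_set t A = (\<lambda>x. t * x) ` (A - {0})"

definition div_set :: "real set \<Rightarrow> real \<Rightarrow> real set" where
  "div_set A t = (\<lambda>x. x / t) ` (A - {0})"

end

theory Submission imports Defs begin

definition shiftseq :: "nat \<Rightarrow> (nat \<Rightarrow> nat) \<Rightarrow> nat \<Rightarrow> nat" where
  "shiftseq n x = (\<lambda>i. x (i + n))"

lemma digit_shift: "digit_seq m x \<Longrightarrow> digit_seq m (shiftseq n x)"
  by (simp add: digit_seq_def shiftseq_def)

lemma madic_sums:
  assumes m2: "m \<ge> 2" and d: "digit_seq m x"
  shows "summable (\<lambda>i. real (x i) / real m ^ (i + 1))"
    and "0 \<le> madic_value m x" and "madic_value m x \<le> 1"
proof -
  have mpos: "real m > 1" using m2 by simp
  have g: "(\<lambda>i. (real m - 1) / real m * (1 / real m) ^ i) sums ((real m - 1) / real m * (1 / (1 - 1 / real m)))"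
    by (intro sums_mult geometric_sums) (use mpos in simp)
  have "(real m - 1) / real m * (1 / (1 - 1 / real m)) = 1"
    using mpos by (simp add: field_simps)
  with g have g1: "(\<lambda>i. (real m - 1) / real m ^ (i + 1)) sums 1"
    by (simp add: power_divide field_simps)
  have le: "real (x i) / real m ^ (i + 1) \<le> (real m - 1) / real m ^ (i + 1)" for i
  proof -
    have "x i < m" using d by (simp add: digit_seq_def)
    then have "real (x i) \<le> real m - 1" by linarith
    then show ?thesis using mpos by (intro divide_right_mono) auto
  qed
  show s: "summable (\<lambda>i. real (x i) / real m ^ (i + 1))"
    by (rule summable_comparison_test[OF _ sums_summable[OF g1]]) (use le in auto)
  show "0 \<le> madic_value m x" unfolding madic_value_def
    by (intro suminf_nonneg s) auto
  show "madic_value m x \<le> 1" unfolding madic_value_def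
    using suminf_le[OF le s sums_summable[OF g1]] sums_unique[OF g1] by simp
qed

lemma madic_split:
  assumes m2: "m \<ge> 2" and d: "digit_seq m x"
  shows "madic_value m x = (\<Sum>i<n. real (x i) / real m ^ (i + 1)) + madic_value m (shiftseq n x) / real m ^ n"
proof -
  have s: "summable (\<lambda>i. real (x i) / real m ^ (i + 1))" using madic_sums[OF m2 d] by simp
  have s2: "summable (\<lambda>i. real (shiftseq n x i) / real m ^ (i + 1))"
    using madic_sums[OF m2 digit_shift[OF d]] by simp
  have "(\<Sum>i. real (x (i + n)) / real m ^ (i + n + 1)) = (\<Sum>i. real (shiftseq n x i) / real m ^ (i + 1) / real m ^ n)"
    by (simp add: shiftseq_def power_add field_simps)
  also have "\<dots> = madic_value m (shiftseq n x) / real m ^ n"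
    unfolding madic_value_def by (rule suminf_divide[OF s2])
  finally show ?thesis
    unfolding madic_value_def[of m x] using suminf_split_initial_segment[OF s, of n] by simp
qed

lemma madic_int:
  assumes m2: "m \<ge> 2" and d: "digit_seq m x"
  shows "\<exists>K::int. real m ^ n * madic_value m x = madic_value m (shiftseq n x) + K"
proof -
  have mpos: "real m > 0" using m2 by simp
  have "real m ^ n * (\<Sum>i<n. real (x i) / real m ^ (i + 1)) = (\<Sum>i<n. real (x i * m ^ (n - Suc i)))"
    unfolding sum_distrib_left
  proof (rule sum.cong[OF refl])
    fix i assume "i \<in> {..<n}"
    then have "n = (n - Suc i) + (i + 1)" by simp
    then have "real m ^ n = real m ^ (n - Suc i) * real m ^ (i + 1)"
      by (metis power_add)
    then show "real m ^ n * (real (x i) / real m ^ (i + 1)) = real (x i * m ^ (n - Suc i))"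
      using mpos by simp
  qed
  then show ?thesis using madic_split[OF m2 d, of n] mpos
    by (intro exI[of _ "int (\<Sum>i<n. x i * m ^ (n - Suc i))"]) (simp add: field_simps)
qed

lemma sft_shift: "x \<in> sft m F \<Longrightarrow> shiftseq n x \<in> sft m F"
  unfolding sft_def occurs_at_def shiftseq_def digit_seq_def
  by (auto simp: add.assoc add.commute) (metis add.commute add.left_commute)


lemma floor_step:
  assumes m2: "m \<ge> 2"
  shows "\<lfloor>c * real m ^ Suc L\<rfloor> = int m * \<lfloor>c * real m ^ L\<rfloor> + \<lfloor>c * real m ^ Suc L\<rfloor> mod int m"
proof -
  have "\<lfloor>c * real m ^ Suc L / real_of_int (int m)\<rfloor> = \<lfloor>c * real m ^ Suc L\<rfloor> div int m"
    by (rule floor_divide_real_eq_div) simp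
  moreover have "c * real m ^ Suc L / real_of_int (int m) = c * real m ^ L" using m2 by simp
  ultimately have "\<lfloor>c * real m ^ Suc L\<rfloor> div int m = \<lfloor>c * real m ^ L\<rfloor>" by simp
  then show ?thesis by (metis div_mult_mod_eq mult.commute)
qed

lemma floor_sum:
  assumes m2: "m \<ge> 2"
  shows "(\<Sum>i<L. real_of_int (\<lfloor>c * real m ^ Suc i\<rfloor> mod int m) / real m ^ (i + 1))
     = real_of_int \<lfloor>c * real m ^ L\<rfloor> / real m ^ L - real_of_int \<lfloor>c\<rfloor>"
proof (induction L)
  case 0 then show ?case by simp
next
  case (Suc L)
  have mpos: "real m > 0" using m2 by simp
  have e: "real_of_int \<lfloor>c * real m ^ Suc L\<rfloor> = real m * real_of_int \<lfloor>c * real m ^ L\<rfloor> + real_of_int (\<lfloor>c * real m ^ Suc L\<rfloor> mod int m)"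
    using arg_cong[OF floor_step[OF m2, of c L], of real_of_int] by simp
  have alg: "(a / M - f) + r / (mm * M) = (mm * a + r) / (mm * M) - f" if "M > 0" "mm > 0" for a M f r mm :: real
    using that by (simp add: field_simps)
  have "(\<Sum>i<Suc L. real_of_int (\<lfloor>c * real m ^ Suc i\<rfloor> mod int m) / real m ^ (i + 1))
     = (real_of_int \<lfloor>c * real m ^ L\<rfloor> / real m ^ L - real_of_int \<lfloor>c\<rfloor>) + real_of_int (\<lfloor>c * real m ^ Suc L\<rfloor> mod int m) / (real m * real m ^ L)"
    using Suc by simp
  also have "\<dots> = (real m * real_of_int \<lfloor>c * real m ^ L\<rfloor> + real_of_int (\<lfloor>c * real m ^ Suc L\<rfloor> mod int m)) / (real m * real m ^ L) - real_of_int \<lfloor>c\<rfloor>"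
    by (rule alg) (use mpos in auto)
  also have "\<dots> = real_of_int \<lfloor>c * real m ^ Suc L\<rfloor> / real m ^ Suc L - real_of_int \<lfloor>c\<rfloor>"
    unfolding e by simp
  finally show ?case .
qed

lemma dense_orbit:
  assumes m2: "m \<ge> 2" and d: "digit_seq m x" and u: "universal_seq m x"
    and c: "0 < c" "c < 1" and e: "0 < e"
  shows "\<exists>n. \<bar>madic_value m (shiftseq n x) - c\<bar> < e"
proof -
  have mpos: "real m > 1" using m2 by simp
  obtain L0 where L0: "(1 / real m) ^ L0 < e" using real_arch_pow_inv[OF e, of "1 / real m"] mpos by auto
  define L where "L = Suc L0"
  have Le: "1 / real m ^ L < e"
  proof -
    have "1 / real m ^ L \<le> 1 / real m ^ L0" unfolding L_def using mpos
      by (intro divide_left_mono) auto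
    then show ?thesis using L0 by (simp add: power_divide)
  qed
  define g where "g i = \<lfloor>c * real m ^ i\<rfloor>" for i
  define w where "w = map (\<lambda>i. nat (g (Suc i) mod int m)) [0..<L]"
  have lw: "length w = L" "length w \<ge> 1" by (auto simp: w_def L_def)
  have wd: "\<forall>a\<in>set w. a < m"
  proof
    fix a assume "a \<in> set w"
    then obtain i where a: "a = nat (g (Suc i) mod int m)" by (auto simp: w_def)
    have "g (Suc i) mod int m < int m" "0 \<le> g (Suc i) mod int m" using m2 by simp_all
    then show "a < m" unfolding a by linarith
  qed
  obtain n where occ: "occurs_at w x n" using u lw wd unfolding universal_seq_def by blast
  define z where "z = shiftseq n x"
  have dz: "digit_seq m z" using digit_shift[OF d] z_def by simp
  have zi: "real (z i) = real_of_int (g (Suc i) mod int m)" if "i < L" for i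
  proof -
    have "x (n + i) = w ! i" using occ that lw unfolding occurs_at_def by simp
    moreover have "w ! i = nat (g (Suc i) mod int m)" using that by (simp add: w_def)
    moreover have "0 \<le> g (Suc i) mod int m" using m2 by simp
    ultimately show ?thesis unfolding z_def shiftseq_def by (simp add: add.commute)
  qed
  have W: "(\<Sum>i<L. real (z i) / real m ^ (i + 1)) = real_of_int (g L) / real m ^ L"
  proof -
    have "(\<Sum>i<L. real (z i) / real m ^ (i + 1)) = (\<Sum>i<L. real_of_int (g (Suc i) mod int m) / real m ^ (i + 1))"
      by (rule sum.cong) (auto simp: zi)
    also have "\<dots> = real_of_int (g L) / real m ^ L - real_of_int \<lfloor>c\<rfloor>"
      unfolding g_def by (rule floor_sum[OF m2])
    also have "\<lfloor>c\<rfloor> = 0" using c by (simp add: floor_eq_iff)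
    finally show ?thesis by simp
  qed
  have sp: "madic_value m z = real_of_int (g L) / real m ^ L + madic_value m (shiftseq L z) / real m ^ L"
    using madic_split[OF m2 dz, of L] W by simp
  have t01: "0 \<le> madic_value m (shiftseq L z)" "madic_value m (shiftseq L z) \<le> 1"
    using madic_sums[OF m2 digit_shift[OF dz]] by auto
  have gL: "real_of_int (g L) \<le> c * real m ^ L" "c * real m ^ L < real_of_int (g L) + 1"
    unfolding g_def by linarith+
  have pm: "real m ^ L > 0" using mpos by simp
  have "real_of_int (g L) / real m ^ L \<le> c" using gL pm by (simp add: divide_le_eq)
  moreover have "c < real_of_int (g L) / real m ^ L + 1 / real m ^ L"
  proof -
    have "c < (real_of_int (g L) + 1) / real m ^ L" using gL pm by (simp add: pos_less_divide_eq)
    then show ?thesis by (simp add: add_divide_distrib)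
  qed
  moreover have "madic_value m (shiftseq L z) / real m ^ L \<le> 1 / real m ^ L"
    using t01 pm by (intro divide_right_mono) auto
  moreover have "0 \<le> madic_value m (shiftseq L z) / real m ^ L" using t01 pm by simp
  ultimately have "\<bar>madic_value m z - c\<bar> \<le> 1 / real m ^ L" unfolding sp by linarith
  then show ?thesis using Le unfolding z_def by (intro exI[of _ n]) linarith
qed


lemma nd_affine:
  fixes S :: "real set" and u d N :: real
  assumes nd: "interior S = {}" and u: "u \<noteq> 0" and d: "d \<noteq> 0"
  shows "interior ((\<lambda>y. (u * y + N) / d) ` S) = {}"
proof (rule ccontr)
  define f where "f = (\<lambda>y. (u * y + N) / d)"
  assume "interior ((\<lambda>y. (u * y + N) / d) ` S) \<noteq> {}"
  then obtain z where "z \<in> interior (f ` S)" unfolding f_def by auto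
  then obtain T where T: "open T" "z \<in> T" "T \<subseteq> f ` S" by (meson interiorE)
  have cf: "continuous_on UNIV f" unfolding f_def using d by (intro continuous_intros) auto
  have oP: "open (f -` T)" using open_vimage[OF T(1) cf] by simp
  have inj: "f p = f q \<Longrightarrow> p = q" for p q using u d unfolding f_def by (simp add: field_simps)
  have sub: "f -` T \<subseteq> S"
  proof
    fix p assume "p \<in> f -` T"
    then have "f p \<in> f ` S" using T by auto
    then show "p \<in> S" using inj by auto
  qed
  obtain y where y: "y \<in> S" "z = f y" using T by auto
  have "y \<in> interior S" using interiorI[OF oP _ sub] y T by auto
  then show False using nd by simp
qed

lemma finite_union_nd:
  fixes B :: "'i \<Rightarrow> real set"
  assumes "finite I" "\<And>i. i \<in> I \<Longrightarrow> closed (B i) \<and> interior (B i) = {}"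
  shows "interior (\<Union>i\<in>I. B i) = {}"
  using assms
proof (induction I rule: finite_induct)
  case empty then show ?case by simp
next
  case (insert i I)
  have "interior (B i \<union> (\<Union>j\<in>I. B j)) = interior (B i)"
    by (rule interior_closed_Un_empty_interior) (use insert in auto)
  then show ?case using insert by simp
qed

lemma key:
  fixes u d v :: int
  assumes m2: "m \<ge> 2" and dx: "digit_seq m x" and ux: "universal_seq m x"
    and A01: "A \<subseteq> {0..1}"
    and shA: "\<forall>a\<in>A. \<forall>n. \<exists>a'\<in>A. \<exists>K::int. real m ^ n * a = a' + K"
    and nd: "interior (closure A) = {}" and u0: "u \<noteq> 0" and d0: "d > 0" and aA: "a \<in> A"
    and eq: "real_of_int d * madic_value m x = real_of_int u * a + real_of_int v"
  shows False
proof -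
  define f where "f N y = (real_of_int u * y + real_of_int N) / real_of_int d" for N :: int and y :: real
  define B where "B = (\<Union>N\<in>{-\<bar>u\<bar>..d+\<bar>u\<bar>}. f N ` closure A)"
  have cA: "closure A \<subseteq> {0..1}" using A01 closure_minimal by blast
  have compA: "compact (closure A)"
    using cA by (meson compact_Icc compact_imp_bounded bounded_subset closed_closure compact_eq_bounded_closed)
  have clB: "closed (f N ` closure A)" for N
    unfolding f_def using d0 by (intro compact_imp_closed compact_continuous_image compA continuous_intros) auto
  have inB: "interior (f N ` closure A) = {}" for N
    unfolding f_def by (rule nd_affine[OF nd]) (use u0 d0 in auto)
  have clB': "closed B" unfolding B_def using clB by (intro closed_UN) auto
  have iB: "interior B = {}" unfolding B_def using clB inB by (intro finite_union_nd) auto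
  have "\<not> {0<..<(1::real)} \<subseteq> B"
  proof
    assume "{0<..<(1::real)} \<subseteq> B"
    then have "{0<..<(1::real)} \<subseteq> interior B" by (intro interior_maximal) auto
    moreover have "(1/2::real) \<in> {0<..<1}" by simp
    ultimately show False using iB by blast
  qed
  then obtain c where c: "0 < c" "c < 1" "c \<notin> B" by (auto simp: subset_iff)
  have "open (- B)" using clB' by auto
  then obtain e where e: "e > 0" "ball c e \<subseteq> - B" using c open_contains_ball by blast
  obtain n where n: "\<bar>madic_value m (shiftseq n x) - c\<bar> < e"
    using dense_orbit[OF m2 dx ux c(1,2) e(1)] by blast
  define sn where "sn = madic_value m (shiftseq n x)"
  have snB: "sn \<notin> B" using n e unfolding sn_def ball_def dist_real_def by (auto simp: abs_minus_commute)
  obtain J :: int where J: "real m ^ n * madic_value m x = sn + J" using madic_int[OF m2 dx, of n] sn_def by auto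
  obtain a' K where a': "a' \<in> A" and K: "real m ^ n * a = a' + real_of_int K" using shA aA by blast
  have sn01: "0 \<le> sn" "sn \<le> 1" unfolding sn_def using madic_sums[OF m2 digit_shift[OF dx]] by auto
  have a01: "0 \<le> a'" "a' \<le> 1" using a' A01 by auto
  define N where "N = u * K + v * int m ^ n - d * J"
  have "real_of_int d * (real m ^ n * madic_value m x) = real_of_int u * (real m ^ n * a) + real_of_int v * real m ^ n"
    using arg_cong[OF eq, of "\<lambda>r. r * real m ^ n"] by (simp add: algebra_simps)
  then have "real_of_int d * (sn + J) = real_of_int u * (a' + K) + real_of_int v * real m ^ n"
    unfolding J K .
  then have NE: "real_of_int N = real_of_int d * sn - real_of_int u * a'"
    unfolding N_def by (simp add: algebra_simps)
  have ua: "\<bar>real_of_int u * a'\<bar> \<le> \<bar>real_of_int u\<bar>"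
    using a01 by (simp add: abs_mult mult_left_le)
  have "real_of_int d * sn \<le> real_of_int d" using sn01 d0 by (simp add: mult_left_le)
  moreover have "0 \<le> real_of_int d * sn" using sn01 d0 by simp
  ultimately have "real_of_int (-\<bar>u\<bar>) \<le> real_of_int N" "real_of_int N \<le> real_of_int (d + \<bar>u\<bar>)"
    using NE ua by (simp_all add: abs_le_iff)
  then have Nr: "N \<in> {-\<bar>u\<bar>..d+\<bar>u\<bar>}" by (simp only: of_int_le_iff) simp
  have "sn = f N a'" unfolding f_def using NE d0 by (simp add: field_simps)
  then have "sn \<in> B" unfolding B_def using Nr a' closure_subset by blast
  then show False using snB by simp
qed


theorem corollary3:
  fixes m :: nat and F :: "nat list set" and A :: "real set"
  assumes m2: "m \<ge> 2"
    and finF: "finite F"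
    and A_def: "A = madic_value m ` sft m F"
    and nowhere_dense: "interior (closure A) = {}"
  shows "(\<forall>t. 0 < t \<and> t < 1 \<and> has_universal_expansion m t \<longrightarrow>
            (\<lambda>x. x - t) ` A \<subseteq> - \<rat> \<and> (\<lambda>x. x + t) ` A \<subseteq> - \<rat> \<and> div_set A t \<subseteq> - \<rat>)
       \<and> (\<forall>t. 1 < t \<and> has_universal_expansion m (1 / t) \<longrightarrow> scale_set t A \<subseteq> - \<rat>)"
proof -
  have A01: "A \<subseteq> {0..1}"
  proof
    fix a assume "a \<in> A"
    then obtain y where "y \<in> sft m F" "a = madic_value m y" using A_def by auto
    then show "a \<in> {0..1}" using madic_sums[OF m2, of y] by (auto simp: sft_def)
  qed
  have shA: "\<forall>a\<in>A. \<forall>n. \<exists>a'\<in>A. \<exists>K::int. real m ^ n * a = a' + K"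
  proof (intro ballI allI)
    fix a n assume "a \<in> A"
    then obtain y where y: "y \<in> sft m F" "a = madic_value m y" using A_def by auto
    then have "digit_seq m y" by (simp add: sft_def)
    from madic_int[OF m2 this, of n] obtain K :: int where
      "real m ^ n * madic_value m y = madic_value m (shiftseq n y) + K" by blast
    moreover have "madic_value m (shiftseq n y) \<in> A" using A_def sft_shift[OF y(1)] by auto
    ultimately show "\<exists>a'\<in>A. \<exists>K::int. real m ^ n * a = a' + K" using y by blast
  qed
  have K: "False" if "universal_seq m x" "digit_seq m x" "a \<in> A" "u \<noteq> 0" "d > 0"
    "real_of_int d * madic_value m x = real_of_int u * a + real_of_int v" for x a and u d v :: int
    using key[OF m2 that(2,1) A01 shA nowhere_dense that(4,5,3,6)] .
  have part1: "(\<lambda>x. x - t) ` A \<subseteq> - \<rat> \<and> (\<lambda>x. x + t) ` A \<subseteq> - \<rat> \<and> div_set A t \<subseteq> - \<rat>"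
    if t: "0 < t" "t < 1" "has_universal_expansion m t" for t
  proof -
    obtain x where x: "digit_seq m x" "t = madic_value m x" "universal_seq m x"
      using t(3) unfolding has_universal_expansion_def is_madic_expansion_def by blast
    have 1: "(\<lambda>x. x - t) ` A \<subseteq> - \<rat>"
    proof
      fix y assume "y \<in> (\<lambda>x. x - t) ` A"
      then obtain a where a: "a \<in> A" "y = a - t" by auto
      show "y \<in> - \<rat>"
      proof
        assume "y \<in> \<rat>"
        then obtain p r :: int where r: "r > 0" "y = p / r" by (metis Rats_cases')
        have "real_of_int r * madic_value m x = real_of_int r * a + real_of_int (- p)"
          using r a x(2) by (simp add: field_simps)
        then show False using K[OF x(3,1) a(1), of r r "-p"] r by simp
      qed
    qed
    have 2: "(\<lambda>x. x + t) ` A \<subseteq> - \<rat>"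
    proof
      fix y assume "y \<in> (\<lambda>x. x + t) ` A"
      then obtain a where a: "a \<in> A" "y = a + t" by auto
      show "y \<in> - \<rat>"
      proof
        assume "y \<in> \<rat>"
        then obtain p r :: int where r: "r > 0" "y = p / r" by (metis Rats_cases')
        have "real_of_int r * madic_value m x = real_of_int (-r) * a + real_of_int p"
          using r a x(2) by (simp add: field_simps)
        then show False using K[OF x(3,1) a(1), of "-r" r p] r by simp
      qed
    qed
    have 3: "div_set A t \<subseteq> - \<rat>"
    proof
      fix y assume "y \<in> div_set A t"
      then obtain a where a: "a \<in> A" "a \<noteq> 0" "y = a / t" by (auto simp: div_set_def)
      have "a \<ge> 0" using A01 a by auto
      then have ypos: "y > 0" using a t by simp
      show "y \<in> - \<rat>"
      proof
        assume "y \<in> \<rat>"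
        then obtain p r :: int where r: "r > 0" "y = p / r" by (metis Rats_cases')
        have p: "p > 0" using ypos r by (simp add: zero_less_divide_iff)
        have "real_of_int p * madic_value m x = real_of_int r * a + real_of_int 0"
          using r a x(2) t p by (simp add: field_simps)
        then show False using K[OF x(3,1) a(1), of r p 0] r p by simp
      qed
    qed
    show ?thesis using 1 2 3 by blast
  qed
  have part2: "scale_set t A \<subseteq> - \<rat>" if t: "1 < t" "has_universal_expansion m (1 / t)" for t
  proof -
    obtain x where x: "digit_seq m x" "1 / t = madic_value m x" "universal_seq m x"
      using t(2) unfolding has_universal_expansion_def is_madic_expansion_def by blast
    show ?thesis
    proof
      fix y assume "y \<in> scale_set t A"
      then obtain a where a: "a \<in> A" "a \<noteq> 0" "y = t * a" by (auto simp: scale_set_def)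
      have "a \<ge> 0" using A01 a by auto
      then have ypos: "y > 0" using a t by simp
      show "y \<in> - \<rat>"
      proof
        assume "y \<in> \<rat>"
        then obtain p r :: int where r: "r > 0" "y = p / r" by (metis Rats_cases')
        have p: "p > 0" using ypos r by (simp add: zero_less_divide_iff)
        have "real_of_int p * (1 / t) = real_of_int r * a"
          using r a t p by (simp add: field_simps)
        then have "real_of_int p * madic_value m x = real_of_int r * a + real_of_int 0"
          using x(2) by simp
        then show False using K[OF x(3,1) a(1), of r p 0] r p by simp
      qed
    qed
  qed
  show ?thesis using part1 part2 by blast
qed

end
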